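(* Every ideal triangulation $T$ of $(S,V)$ admits a branching.
   Context: $S$ is a compact closed connected surface and $V\subset S$ is a finite set of $n$ marked points with $\chi(S)-n<0$. An ideal triangulation of $(S,V)$ is a possibly loose triangulation of $S$ (self- and multiple adjacencies allowed) with vertex set exactly $V$, i.e. obtained by gluing abstract triangles along abstract edges in pairs. A branching of $T$ is a choice of orientation of each edge such that, on every abstract triangle, the induced orientations of its three edges are induced by a total order of its vertices, each edge pointing towards the larger endpoint. Equivalently, it is a $\Delta$-complex structure on $T$. *)

theory Defs
  imports Main
begin

(* A combinatorial ideal triangulation: a finite set F of abstract triangles, each with
   corners 0,1,2.  A dart (t,a,b) is the side of triangle t joining corner a to corner b,
   traversed from a to b.  The gluing g pairs the sides: it sends each oriented side to the
   oriented side it is identified with (endpoint a is glued to the first endpoint of g(t,a,b)). *)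

definition darts :: "'f set \<Rightarrow> ('f \<times> nat \<times> nat) set" where
  "darts F = {(t, a, b). t \<in> F \<and> a < 3 \<and> b < 3 \<and> a \<noteq> b}"

fun rev_dart :: "'f \<times> nat \<times> nat \<Rightarrow> 'f \<times> nat \<times> nat" where
  "rev_dart (t, a, b) = (t, b, a)"

fun side_of :: "'f \<times> nat \<times> nat \<Rightarrow> 'f \<times> nat set" where
  "side_of (t, a, b) = (t, {a, b})"

definition adjacent :: "'f set \<Rightarrow> ('f \<times> nat \<times> nat \<Rightarrow> 'f \<times> nat \<times> nat) \<Rightarrow> ('f \<times> 'f) set" where
  "adjacent F g = {(t, t'). \<exists>d \<in> darts F. fst d = t \<and> fst (g d) = t'}"

definition ideal_triangulation ::
  "'f set \<Rightarrow> ('f \<times> nat \<times> nat \<Rightarrow> 'f \<times> nat \<times> nat) \<Rightarrow> bool" where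
  "ideal_triangulation F g \<longleftrightarrow>
     finite F \<and> F \<noteq> {} \<and>
     (\<forall>d \<in> darts F. g d \<in> darts F) \<and>
     (\<forall>d \<in> darts F. g (g d) = d) \<and>
     (\<forall>d \<in> darts F. g (rev_dart d) = rev_dart (g d)) \<and>
     (\<forall>d \<in> darts F. side_of (g d) \<noteq> side_of d) \<and>
     (\<forall>t \<in> F. \<forall>t' \<in> F. (t, t') \<in> (adjacent F g)\<^sup>*)"

(* A branching: an orientation of every edge (ori d = True means the edge carrying dart d is
   oriented from the first to the second endpoint of d), well defined on glued sides, such
   that on every triangle it is induced by a total order of the three corners. *)
definition is_branching ::
  "'f set \<Rightarrow> ('f \<times> nat \<times> nat \<Rightarrow> 'f \<times> nat \<times> nat) \<Rightarrow> ('f \<times> nat \<times> nat \<Rightarrow> bool) \<Rightarrow> bool" where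
  "is_branching F g ori \<longleftrightarrow>
     (\<forall>d \<in> darts F. ori (rev_dart d) = (\<not> ori d)) \<and>
     (\<forall>d \<in> darts F. ori (g d) = ori d) \<and>
     (\<forall>t \<in> F. \<exists>r :: nat \<Rightarrow> nat. inj_on r {0, 1, 2} \<and>
        (\<forall>a < 3. \<forall>b < 3. a \<noteq> b \<longrightarrow> (ori (t, a, b) \<longleftrightarrow> r a < r b)))"

end

theory Submission
  imports Defs
begin

definition good :: "('f \<times> nat \<times> nat \<Rightarrow> bool) \<Rightarrow> 'f \<Rightarrow> bool" where
  "good ori t \<longleftrightarrow> (\<exists>r::nat\<Rightarrow>nat. inj_on r {0,1,2} \<and>
        (\<forall>a < 3. \<forall>b < 3. a \<noteq> b \<longrightarrow> (ori (t, a, b) \<longleftrightarrow> r a < r b)))"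

definition sol :: "'f set \<Rightarrow> ('f \<times> nat \<times> nat \<Rightarrow> 'f \<times> nat \<times> nat) \<Rightarrow> ('f \<times> nat \<times> nat \<Rightarrow> bool) \<Rightarrow> bool" where
  "sol G g ori \<longleftrightarrow> (\<forall>d \<in> darts G. ori (rev_dart d) = (\<not> ori d)) \<and>
     (\<forall>d \<in> darts G. g d \<in> darts G \<longrightarrow> ori (g d) = ori d) \<and> (\<forall>t \<in> G. good ori t)"

lemma mem_darts: "(t,a,b) \<in> darts G \<longleftrightarrow> t \<in> G \<and> a<3 \<and> b<3 \<and> a\<noteq>b"
  by (simp add: darts_def)

lemma three: "a<3 \<Longrightarrow> b<3 \<Longrightarrow> cc<3 \<Longrightarrow> a\<noteq>b \<Longrightarrow> b\<noteq>cc \<Longrightarrow> a\<noteq>cc \<Longrightarrow> (i::nat)<3 \<Longrightarrow> i=a \<or> i=b \<or> i=cc"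
  by arith

lemma good_cong: "(\<And>a b. f (t,a,b) = h (t,a,b)) \<Longrightarrow> good f t = good h t"
  by (simp add: good_def)

lemma pqs_ex: "\<not> (x = y \<and> y = z) \<Longrightarrow> \<exists>p q s::nat. distinct [p,q,s] \<and> (x \<longleftrightarrow> p<q) \<and> (y \<longleftrightarrow> q<s) \<and> (z \<longleftrightarrow> s<p)"
    by (cases x; cases y; cases z;
        ((rule exI[of _ "0::nat"], rule exI[of _ "1::nat"], rule exI[of _ "2::nat"], simp; fail)
     | (rule exI[of _ "1::nat"], rule exI[of _ "2::nat"], rule exI[of _ "0::nat"], simp; fail)
     | (rule exI[of _ "0::nat"], rule exI[of _ "2::nat"], rule exI[of _ "1::nat"], simp; fail)
     | (rule exI[of _ "2::nat"], rule exI[of _ "0::nat"], rule exI[of _ "1::nat"], simp; fail)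
     | (rule exI[of _ "1::nat"], rule exI[of _ "0::nat"], rule exI[of _ "2::nat"], simp; fail)
     | (rule exI[of _ "2::nat"], rule exI[of _ "1::nat"], rule exI[of _ "0::nat"], simp; fail)
     | (simp; fail)))

lemma good_intro:
  assumes abc: "a<3" "b<3" "cc<3" "a\<noteq>b" "b\<noteq>cc" "a\<noteq>cc"
  and o: "ori (t,a,b) = x" "ori (t,b,a) = (\<not>x)" "ori (t,b,cc) = y" "ori (t,cc,b) = (\<not>y)"
         "ori (t,cc,a) = z" "ori (t,a,cc) = (\<not>z)"
  and ng: "\<not> (x = y \<and> y = z)"
  shows "good ori t"
proof -
  have H: "\<And>i. i<3 \<Longrightarrow> i=a \<or> i=b \<or> i=cc" using three[OF abc] by blast
  have H2: "{0,1,2::nat} = {a,b,cc}" using H abc by auto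
  have key: "\<exists>p q s::nat. distinct [p,q,s] \<and> (x \<longleftrightarrow> p<q) \<and> (y \<longleftrightarrow> q<s) \<and> (z \<longleftrightarrow> s<p)"
    using ng by (rule pqs_ex)
  then obtain p q s :: nat where pqs: "distinct [p,q,s]" "(x \<longleftrightarrow> p<q)" "(y \<longleftrightarrow> q<s)" "(z \<longleftrightarrow> s<p)"
    by blast
  define r where "r = (\<lambda>i::nat. if i = a then p else if i = b then q else s)"
  have "inj_on r {a,b,cc}" using pqs abc unfolding r_def inj_on_def by auto
  hence "inj_on r {0,1,2}" using H2 by simp
  moreover have "\<forall>i<3. \<forall>j<3. i \<noteq> j \<longrightarrow> (ori (t, i, j) \<longleftrightarrow> r i < r j)"
  proof (intro allI impI)
    fix i j :: nat assume "i<3" "j<3" "i\<noteq>j"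
    then have "i=a \<or> i=b \<or> i=cc" "j=a \<or> j=b \<or> j=cc" using H by auto
    then show "ori (t, i, j) \<longleftrightarrow> r i < r j"
      using \<open>i\<noteq>j\<close> o pqs abc unfolding r_def by auto
  qed
  ultimately show ?thesis unfolding good_def by blast
qed

lemma IT_facts:
  assumes "ideal_triangulation F g"
  shows "finite F" "\<And>d. d\<in>darts F \<Longrightarrow> g d \<in> darts F" "\<And>d. d \<in> darts F \<Longrightarrow> g (g d) = d"
    "\<And>d. d\<in>darts F \<Longrightarrow> g (rev_dart d) = rev_dart (g d)"
    "\<And>d. d\<in>darts F \<Longrightarrow> side_of (g d) \<noteq> side_of d"
    "\<And>t t'. t\<in>F \<Longrightarrow> t'\<in>F \<Longrightarrow> (t,t') \<in> (adjacent F g)\<^sup>*"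
  using assms unfolding ideal_triangulation_def by blast+

lemma darts_mono: "G \<subseteq> F \<Longrightarrow> darts G \<subseteq> darts F"
  unfolding darts_def by auto

lemma fst_rev[simp]: "fst (rev_dart d) = fst d"
  by (cases d) auto

lemma rev_rev[simp]: "rev_dart (rev_dart d) = d"
  by (cases d) auto

lemma rev_darts: "d \<in> darts G \<Longrightarrow> rev_dart d \<in> darts G"
  by (cases d) (auto simp: darts_def)

lemma rev_darts_iff[simp]: "rev_dart d \<in> darts G \<longleftrightarrow> d \<in> darts G"
  using rev_darts rev_rev by metis

lemma in_darts_fst: "d \<in> darts F \<Longrightarrow> (d \<in> darts G \<longleftrightarrow> fst d \<in> G)"
  by (cases d) (auto simp: darts_def)

lemma extend:
  assumes IT: "ideal_triangulation F g" and GF: "G \<subseteq> F" and uG: "u \<in> G"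
  and s: "sol (G - {u}) g ori'"
  and abc: "a<3" "b<3" "cc<3" "a\<noteq>b" "b\<noteq>cc" "a\<noteq>cc"
  and E: "\<And>d. d \<in> {(u,a,b),(u,b,cc),(u,cc,a)} \<Longrightarrow> g d \<in> darts (G-{u}) \<Longrightarrow> V (snd d) = ori' (g d)"
  and S: "\<And>d. d \<in> {(u,a,b),(u,b,cc),(u,cc,a)} \<Longrightarrow> fst (g d) = u \<Longrightarrow> V (snd (g d)) = V (snd d)"
  and Vrev: "\<And>p q. p<3 \<Longrightarrow> q<3 \<Longrightarrow> p\<noteq>q \<Longrightarrow> V (q,p) = (\<not> V (p,q))"
  and gd: "\<not> (V(a,b) = V(b,cc) \<and> V(b,cc) = V(cc,a))"
  shows "sol G g (\<lambda>d. if fst d = u then V (snd d) else ori' d)"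
proof -
  define ori where "ori = (\<lambda>d. if fst d = u then V (snd d) else ori' d)"
  note F = IT_facts[OF IT]
  have H: "\<And>i. i<3 \<Longrightarrow> i=a \<or> i=b \<or> i=cc" using three[OF abc] by blast
  have dF: "\<And>d. d \<in> darts G \<Longrightarrow> d \<in> darts F" using darts_mono[OF GF] by blast
  have s1: "\<And>d. d \<in> darts (G-{u}) \<Longrightarrow> ori' (rev_dart d) = (\<not> ori' d)"
   and s2: "\<And>d. d \<in> darts (G-{u}) \<Longrightarrow> g d \<in> darts (G-{u}) \<Longrightarrow> ori' (g d) = ori' d"
   and s3: "\<And>t. t \<in> G-{u} \<Longrightarrow> good ori' t"
    using s unfolding sol_def by blast+
  have cyc: "\<And>p q. p<3 \<Longrightarrow> q<3 \<Longrightarrow> p\<noteq>q \<Longrightarrow>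
      (u,p,q) \<in> {(u,a,b),(u,b,cc),(u,cc,a)} \<or> (u,q,p) \<in> {(u,a,b),(u,b,cc),(u,cc,a)}"
  proof -
    fix p q :: nat assume "p<3" "q<3" "p\<noteq>q"
    then have "p=a \<or> p=b \<or> p=cc" "q=a \<or> q=b \<or> q=cc" using H by auto
    then show "(u,p,q) \<in> {(u,a,b),(u,b,cc),(u,cc,a)} \<or> (u,q,p) \<in> {(u,a,b),(u,b,cc),(u,cc,a)}"
      using \<open>p\<noteq>q\<close> by auto
  qed
  have cycD: "\<And>d. d \<in> {(u,a,b),(u,b,cc),(u,cc,a)} \<Longrightarrow> d \<in> darts G"
    using abc uG by (auto simp: darts_def)
  have K: "\<And>d. d \<in> darts G \<Longrightarrow> fst d = u \<Longrightarrow> fst (g d) \<noteq> u \<Longrightarrow> g d \<in> darts G \<Longrightarrow>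
      V (snd d) = ori' (g d)"
  proof -
    fix d assume d: "d \<in> darts G" "fst d = u" "fst (g d) \<noteq> u" "g d \<in> darts G"
    obtain p q where dpq: "d = (u,p,q)" "p<3" "q<3" "p\<noteq>q" using d by (cases d) (auto simp: darts_def)
    have gdG': "g d \<in> darts (G-{u})" using d dF F(2) in_darts_fst by (metis Diff_iff singletonD)
    show "V (snd d) = ori' (g d)"
    proof (cases "(u,p,q) \<in> {(u,a,b),(u,b,cc),(u,cc,a)}")
      case True thus ?thesis using E gdG' dpq by blast
    next
      case False
      then have e: "(u,q,p) \<in> {(u,a,b),(u,b,cc),(u,cc,a)}" using cyc dpq by blast
      have dr: "d = rev_dart (u,q,p)" using dpq by simp
      have eF: "(u,q,p) \<in> darts F" using cycD[OF e] dF by blast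
      have g1: "g d = rev_dart (g (u,q,p))" using F(4)[OF eF] dr by simp
      have ge: "g (u,q,p) \<in> darts (G-{u})" using gdG' g1 by (metis rev_darts_iff)
      have "V (snd (u,q,p)) = ori' (g (u,q,p))" using E[OF e ge] .
      then show ?thesis using g1 s1[OF ge] Vrev[of q p] dpq by simp
    qed
  qed
  have Ks: "\<And>d. d \<in> darts G \<Longrightarrow> fst d = u \<Longrightarrow> fst (g d) = u \<Longrightarrow> V (snd (g d)) = V (snd d)"
  proof -
    fix d assume d: "d \<in> darts G" "fst d = u" "fst (g d) = u"
    obtain p q where dpq: "d = (u,p,q)" "p<3" "q<3" "p\<noteq>q" using d by (cases d) (auto simp: darts_def)
    show "V (snd (g d)) = V (snd d)"
    proof (cases "(u,p,q) \<in> {(u,a,b),(u,b,cc),(u,cc,a)}")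
      case True thus ?thesis using S d dpq by blast
    next
      case False
      then have e: "(u,q,p) \<in> {(u,a,b),(u,b,cc),(u,cc,a)}" using cyc dpq by blast
      have dr: "d = rev_dart (u,q,p)" using dpq by simp
      have eF: "(u,q,p) \<in> darts F" using cycD[OF e] dF by blast
      have g1: "g d = rev_dart (g (u,q,p))" using F(4)[OF eF] dr by simp
      have fe: "fst (g (u,q,p)) = u" using g1 d by simp
      have Se: "V (snd (g (u,q,p))) = V (snd (u,q,p))" using S[OF e fe] .
      obtain t' p' q' where ge: "g (u,q,p) = (t',p',q')" by (cases "g (u,q,p)") auto
      have "g (u,q,p) \<in> darts F" using F(2)[OF eF] .
      then have "p'<3" "q'<3" "p'\<noteq>q'" using ge by (auto simp: darts_def)
      then show ?thesis using g1 ge Se Vrev[of "p'" "q'"] Vrev[of q p] dpq by simp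
    qed
  qed
  have P1: "\<forall>d \<in> darts G. ori (rev_dart d) = (\<not> ori d)"
  proof
    fix d assume d: "d \<in> darts G"
    obtain t p q where dpq: "d = (t,p,q)" "p<3" "q<3" "p\<noteq>q" "t \<in> G" using d by (cases d) (auto simp: darts_def)
    show "ori (rev_dart d) = (\<not> ori d)"
    proof (cases "t = u")
      case True thus ?thesis using dpq Vrev[of p q] unfolding ori_def by simp
    next
      case False
      then have "d \<in> darts (G-{u})" using dpq by (auto simp: darts_def)
      thus ?thesis using s1[of d] dpq False unfolding ori_def by simp
    qed
  qed
  have P2: "\<forall>d \<in> darts G. g d \<in> darts G \<longrightarrow> ori (g d) = ori d"
  proof (intro ballI impI)
    fix d assume d: "d \<in> darts G" "g d \<in> darts G"
    show "ori (g d) = ori d"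
    proof (cases "fst d = u"; cases "fst (g d) = u")
      assume "fst d = u" "fst (g d) = u" thus ?thesis using Ks d unfolding ori_def by simp
    next
      assume "fst d = u" "fst (g d) \<noteq> u" thus ?thesis using K d unfolding ori_def by simp
    next
      assume a1: "fst d \<noteq> u" "fst (g d) = u"
      have ggd: "g (g d) = d" using F(3) d dF by blast
      have "V (snd (g d)) = ori' (g (g d))" using K[of "g d"] d a1 ggd by simp
      thus ?thesis using a1 ggd unfolding ori_def by simp
    next
      assume a1: "fst d \<noteq> u" "fst (g d) \<noteq> u"
      have "d \<in> darts (G-{u})" "g d \<in> darts (G-{u})" using d a1 dF F(2) in_darts_fst
        by (metis Diff_iff singletonD)+
      thus ?thesis using s2 a1 unfolding ori_def by simp
    qed
  qed
  have P3: "\<forall>t \<in> G. good ori t"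
  proof
    fix t assume t: "t \<in> G"
    show "good ori t"
    proof (cases "t = u")
      case True
      show ?thesis
        by (rule good_intro[OF abc, where x="V(a,b)" and y="V(b,cc)" and z="V(cc,a)"])
           (use True abc Vrev[of a b] Vrev[of b cc] Vrev[of cc a] gd in \<open>simp_all add: ori_def\<close>)
    next
      case False
      have "good ori' t" using s3 t False by blast
      moreover have "\<And>p q. ori (t,p,q) = ori' (t,p,q)" using False unfolding ori_def by simp
      ultimately show ?thesis using good_cong by metis
    qed
  qed
  show ?thesis using P1 P2 P3 unfolding sol_def ori_def by blast
qed

lemma self_side:
  assumes IT: "ideal_triangulation F g" and uF: "u \<in> F"
  and abc: "a<3" "b<3" "cc<3" "a\<noteq>b" "b\<noteq>cc" "a\<noteq>cc"
  and nab: "fst (g (u,a,b)) \<noteq> u" and self: "fst (g (u,b,cc)) = u"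
  shows "g (u,b,cc) = (u,cc,a) \<or> g (u,b,cc) = (u,a,cc)"
proof -
  note F = IT_facts[OF IT]
  have H: "\<And>i. i<3 \<Longrightarrow> i=a \<or> i=b \<or> i=cc" using three[OF abc] by blast
  have d1: "(u,b,cc) \<in> darts F" "(u,a,b) \<in> darts F" "(u,b,a) \<in> darts F" using abc uF by (auto simp: darts_def)
  obtain t p q where e: "g (u,b,cc) = (t,p,q)" by (cases "g (u,b,cc)") auto
  have "(t,p,q) \<in> darts F" using F(2)[OF d1(1)] e by simp
  then have pq: "p<3" "q<3" "p\<noteq>q" by (auto simp: darts_def)
  have t: "t = u" using self e by simp
  have sd: "{p,q} \<noteq> {b,cc}" using F(5)[OF d1(1)] e t by simp
  have n1: "(p,q) \<noteq> (a,b)"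
  proof
    assume "(p,q) = (a,b)"
    then have "g (u,b,cc) = (u,a,b)" using e t by simp
    then have "g (u,a,b) = (u,b,cc)" using F(3)[OF d1(1)] by simp
    thus False using nab by simp
  qed
  have n2: "(p,q) \<noteq> (b,a)"
  proof
    assume "(p,q) = (b,a)"
    then have "g (u,b,cc) = rev_dart (u,a,b)" using e t by simp
    then have "g (rev_dart (u,a,b)) = (u,b,cc)" using F(3)[OF d1(1)] by simp
    then have "rev_dart (g (u,a,b)) = (u,b,cc)" using F(4)[OF d1(2)] by simp
    then have "g (u,a,b) = rev_dart (u,b,cc)" by (metis rev_rev)
    thus False using nab by simp
  qed
  have "p=a \<or> p=b \<or> p=cc" "q=a \<or> q=b \<or> q=cc" using H pq by auto
  then have "(p,q) = (cc,a) \<or> (p,q) = (a,cc)" using n1 n2 sd pq abc by auto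
  thus ?thesis using e t by auto
qed

lemma self_inv:
  assumes IT: "ideal_triangulation F g" and dF: "d \<in> darts F"
  shows "g d = e \<Longrightarrow> g e = d" and "g d = rev_dart e \<Longrightarrow> g e = rev_dart d"
proof -
  note F = IT_facts[OF IT]
  show "g d = e \<Longrightarrow> g e = d" using F(3)[OF dF] by simp
  assume "g d = rev_dart e"
  then have "g (g d) = g (rev_dart e)" by simp
  then have "d = g (rev_dart e)" using F(3)[OF dF] by simp
  moreover have "rev_dart e \<in> darts F" using F(2)[OF dF] \<open>g d = rev_dart e\<close> by simp
  ultimately have "d = rev_dart (g e)" using F(4) by (metis rev_darts_iff)
  thus "g e = rev_dart d" by simp
qed

lemma fill:
  assumes IT: "ideal_triangulation F g" and GF: "G \<subseteq> F" and uG: "u \<in> G"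
  and s: "sol (G - {u}) g ori'"
  and abc: "a<3" "b<3" "cc<3" "a\<noteq>b" "b\<noteq>cc" "a\<noteq>cc"
  and HAB: "g (u,a,b) \<notin> darts G \<or> (g (u,a,b) \<in> darts (G-{u}) \<and> ori' (g (u,a,b)) = v)"
  and C1: "g (u,b,cc) \<in> darts (G-{u}) \<Longrightarrow> g (u,cc,a) \<in> darts (G-{u}) \<Longrightarrow>
            \<not> (v = ori' (g (u,b,cc)) \<and> v = ori' (g (u,cc,a)))"
  and C2: "g (u,b,cc) \<notin> darts G \<Longrightarrow> g (u,cc,a) \<in> darts (G-{u}) \<Longrightarrow>
            \<not> (v = w \<and> w = ori' (g (u,cc,a)))"
  shows "\<exists>ori. sol G g ori \<and> ori (u,a,b) = v \<and> (g (u,b,cc) \<notin> darts G \<longrightarrow> ori (u,b,cc) = w)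
           \<and> (\<forall>d. fst d \<noteq> u \<longrightarrow> ori d = ori' d)"
proof -
  note F = IT_facts[OF IT]
  have H: "\<And>i. i<3 \<Longrightarrow> i=a \<or> i=b \<or> i=cc" using three[OF abc] by blast
  have uF: "u \<in> F" using uG GF by blast
  have dF: "(u,a,b) \<in> darts F" "(u,b,cc) \<in> darts F" "(u,cc,a) \<in> darts F"
    using abc uF by (auto simp: darts_def)
  have gF: "g (u,a,b) \<in> darts F" "g (u,b,cc) \<in> darts F" "g (u,cc,a) \<in> darts F"
    using dF F(2) by blast+
  have memG: "\<And>e. e \<in> darts F \<Longrightarrow> e \<in> darts G \<longleftrightarrow> fst e \<in> G" using in_darts_fst by blast
  have memG': "\<And>e. e \<in> darts F \<Longrightarrow> e \<in> darts (G-{u}) \<longleftrightarrow> fst e \<in> G \<and> fst e \<noteq> u"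
    using in_darts_fst by blast
  have nab: "fst (g (u,a,b)) \<noteq> u" using HAB memG'[OF gF(1)] memG[OF gF(1)] uG by auto
  have abc2: "b<3" "cc<3" "a<3" "b\<noteq>cc" "cc\<noteq>a" "b\<noteq>a" using abc by auto
  have abc3: "cc<3" "a<3" "b<3" "cc\<noteq>a" "a\<noteq>b" "cc\<noteq>b" using abc by auto
  have F1: "fst (g (u,b,cc)) = u \<Longrightarrow> g (u,b,cc) = (u,cc,a) \<or> g (u,b,cc) = (u,a,cc)"
    using self_side[OF IT uF abc nab] by blast
  have F2: "fst (g (u,cc,a)) = u \<Longrightarrow> g (u,cc,a) = (u,b,cc) \<or> g (u,cc,a) = (u,cc,b)"
  proof -
    assume a1: "fst (g (u,cc,a)) = u"
    show ?thesis
    proof (cases "fst (g (u,b,cc)) = u")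
      case True
      then have "g (u,b,cc) = (u,cc,a) \<or> g (u,b,cc) = (u,a,cc)" using F1 by blast
      then show ?thesis
      proof
        assume "g (u,b,cc) = (u,cc,a)" then show ?thesis using self_inv(1)[OF IT dF(2)] by blast
      next
        assume "g (u,b,cc) = (u,a,cc)"
        then have "g (u,b,cc) = rev_dart (u,cc,a)" by simp
        then show ?thesis using self_inv(2)[OF IT dF(2)] by simp
      qed
    next
      case False
      have "g (u,cc,a) = (u,a,b) \<or> g (u,cc,a) = (u,b,a)"
      proof -
        have "fst (g (u,b,cc)) \<noteq> u" using False .
        from self_side[OF IT uF abc2 this a1] show ?thesis by blast
      qed
      then show ?thesis
      proof
        assume "g (u,cc,a) = (u,a,b)" then have "g (u,a,b) = (u,cc,a)" using self_inv(1)[OF IT dF(3)] by blast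
        then show ?thesis using nab by simp
      next
        assume "g (u,cc,a) = (u,b,a)"
        then have "g (u,cc,a) = rev_dart (u,a,b)" by simp
        then have "g (u,a,b) = rev_dart (u,cc,a)" using self_inv(2)[OF IT dF(3)] by blast
        then show ?thesis using nab by simp
      qed
    qed
  qed
  have I1: "g (u,b,cc) = (u,cc,a) \<Longrightarrow> g (u,cc,a) = (u,b,cc)" using self_inv(1)[OF IT dF(2)] by blast
  have I2: "g (u,b,cc) = (u,a,cc) \<Longrightarrow> g (u,cc,a) = (u,cc,b)"
    using self_inv(2)[OF IT dF(2), of "(u,cc,a)"] by simp
  have I3: "g (u,cc,a) = (u,b,cc) \<Longrightarrow> g (u,b,cc) = (u,cc,a)" using self_inv(1)[OF IT dF(3)] by blast
  have I4: "g (u,cc,a) = (u,cc,b) \<Longrightarrow> g (u,b,cc) = (u,a,cc)"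
    using self_inv(2)[OF IT dF(3), of "(u,b,cc)"] by simp
  define xbc where "xbc = (if g (u,b,cc) \<in> darts (G-{u}) then ori' (g (u,b,cc))
      else if g (u,b,cc) \<notin> darts G then w else \<not> v)"
  define xca where "xca = (if g (u,cc,a) \<in> darts (G-{u}) then ori' (g (u,cc,a))
      else if g (u,cc,a) = (u,b,cc) then xbc else if g (u,cc,a) = (u,cc,b) then \<not> xbc else \<not> v)"
  define V where "V = (\<lambda>pq::nat\<times>nat. if pq = (a,b) then v else if pq = (b,a) then \<not> v
      else if pq = (b,cc) then xbc else if pq = (cc,b) then \<not> xbc
      else if pq = (cc,a) then xca else \<not> xca)"
  have Vab: "V (a,b) = v" "V (b,a) = (\<not>v)" using abc unfolding V_def by auto
  have Vbc: "V (b,cc) = xbc" "V (cc,b) = (\<not>xbc)" using abc unfolding V_def by auto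
  have Vca: "V (cc,a) = xca" "V (a,cc) = (\<not>xca)" using abc unfolding V_def by auto
  have Vrev: "\<And>p q. p<3 \<Longrightarrow> q<3 \<Longrightarrow> p\<noteq>q \<Longrightarrow> V (q,p) = (\<not> V (p,q))"
  proof -
    fix p q :: nat assume "p<3" "q<3" "p\<noteq>q"
    then have "p=a \<or> p=b \<or> p=cc" "q=a \<or> q=b \<or> q=cc" using H by auto
    then show "V (q,p) = (\<not> V (p,q))" using \<open>p\<noteq>q\<close> Vab Vbc Vca by auto
  qed
  have E: "\<And>d. d \<in> {(u,a,b),(u,b,cc),(u,cc,a)} \<Longrightarrow> g d \<in> darts (G-{u}) \<Longrightarrow> V (snd d) = ori' (g d)"
  proof -
    fix d assume d: "d \<in> {(u,a,b),(u,b,cc),(u,cc,a)}" "g d \<in> darts (G-{u})"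
    show "V (snd d) = ori' (g d)"
    proof (cases "d = (u,a,b)")
      case True
      then have "ori' (g (u,a,b)) = v" using HAB d(2) True by (auto simp: darts_def)
      then show ?thesis using True Vab by simp
    next
      case False
      then show ?thesis using d Vbc Vca unfolding xbc_def xca_def by auto
    qed
  qed
  have S: "\<And>d. d \<in> {(u,a,b),(u,b,cc),(u,cc,a)} \<Longrightarrow> fst (g d) = u \<Longrightarrow> V (snd (g d)) = V (snd d)"
  proof -
    fix d assume d: "d \<in> {(u,a,b),(u,b,cc),(u,cc,a)}" "fst (g d) = u"
    have notG'1: "g (u,cc,a) \<notin> darts (G-{u})" if "fst (g (u,cc,a)) = u" using that memG'[OF gF(3)] by simp
    have notG'2: "g (u,b,cc) \<notin> darts (G-{u})" if "fst (g (u,b,cc)) = u" using that memG'[OF gF(2)] by simp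
    have inG2: "g (u,b,cc) \<in> darts G" if "fst (g (u,b,cc)) = u" using that memG[OF gF(2)] uG by simp
    have ne: "(u,cc,b) \<noteq> (u,b,cc)" using abc by simp
    consider "d = (u,a,b)" | "d = (u,b,cc)" | "d = (u,cc,a)" using d by blast
    then show "V (snd (g d)) = V (snd d)"
    proof cases
      case 1 then show ?thesis using d nab by simp
    next
      case 2
      then have f: "fst (g (u,b,cc)) = u" using d by simp
      from F1[OF f] show ?thesis
      proof
        assume h: "g (u,b,cc) = (u,cc,a)"
        then have "g (u,cc,a) = (u,b,cc)" using I1 by blast
        then have "xca = xbc" unfolding xca_def using notG'1 by simp
        then show ?thesis using 2 h Vca Vbc by simp
      next
        assume h: "g (u,b,cc) = (u,a,cc)"
        then have "g (u,cc,a) = (u,cc,b)" using I2 by blast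
        then have "xca = (\<not> xbc)" unfolding xca_def using notG'1 ne by simp
        then show ?thesis using 2 h Vca Vbc by simp
      qed
    next
      case 3
      then have f: "fst (g (u,cc,a)) = u" using d by simp
      from F2[OF f] show ?thesis
      proof
        assume h: "g (u,cc,a) = (u,b,cc)"
        then have "xca = xbc" unfolding xca_def using notG'1 f by simp
        then show ?thesis using 3 h Vca Vbc by simp
      next
        assume h: "g (u,cc,a) = (u,cc,b)"
        then have "xca = (\<not> xbc)" unfolding xca_def using notG'1 f ne by simp
        then show ?thesis using 3 h Vca Vbc by simp
      qed
    qed
  qed
  have gd: "\<not> (V(a,b) = V(b,cc) \<and> V(b,cc) = V(cc,a))"
  proof (cases "g (u,cc,a) \<in> darts (G-{u})")
    case True
    then have xca: "xca = ori' (g (u,cc,a))" unfolding xca_def by simp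
    have nself: "fst (g (u,b,cc)) \<noteq> u"
    proof
      assume "fst (g (u,b,cc)) = u"
      from F1[OF this] have "g (u,cc,a) = (u,b,cc) \<or> g (u,cc,a) = (u,cc,b)" using I1 I2 by blast
      then show False using True memG'[OF gF(3)] by auto
    qed
    show ?thesis
    proof (cases "g (u,b,cc) \<in> darts (G-{u})")
      case True2: True
      then show ?thesis using C1[OF True2 True] xca Vab Vbc Vca unfolding xbc_def by (simp; blast)
    next
      case False
      then have "g (u,b,cc) \<notin> darts G" using nself memG[OF gF(2)] memG'[OF gF(2)] by auto
      then show ?thesis using C2[OF _ True] False xca Vab Vbc Vca unfolding xbc_def by simp
    qed
  next
    case False
    have xbcn: "xbc = (\<not> v)" if "fst (g (u,b,cc)) = u"
      using that memG[OF gF(2)] memG'[OF gF(2)] uG unfolding xbc_def by simp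
    show ?thesis
    proof (cases "g (u,cc,a) = (u,b,cc) \<or> g (u,cc,a) = (u,cc,b)")
      case True
      then have "fst (g (u,b,cc)) = u" using True I3 I4 by (metis fst_conv)
      then show ?thesis using xbcn Vab Vbc by simp
    next
      case F3: False
      then have "xca = (\<not> v)" using False F3 unfolding xca_def by simp
      then show ?thesis using Vab Vca by (simp; blast)
    qed
  qed
  have sG: "sol G g (\<lambda>d. if fst d = u then V (snd d) else ori' d)"
    by (rule extend[OF IT GF uG s abc E S Vrev gd])
  show ?thesis
  proof (rule exI[of _ "\<lambda>d. if fst d = u then V (snd d) else ori' d"], intro conjI impI allI)
    show "sol G g (\<lambda>d. if fst d = u then V (snd d) else ori' d)" by (rule sG)
    show "(if fst (u,a,b) = u then V (snd (u,a,b)) else ori' (u,a,b)) = v" using Vab by simp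
    assume "g (u,b,cc) \<notin> darts G"
    then have "xbc = w" unfolding xbc_def by (auto simp: darts_def)
    then show "(if fst (u,b,cc) = u then V (snd (u,b,cc)) else ori' (u,b,cc)) = w" using Vbc by simp
  next
    fix d :: "'a \<times> nat \<times> nat" assume "fst d \<noteq> u"
    then show "(if fst d = u then V (snd d) else ori' d) = ori' d" by simp
  qed
qed

definition bnd :: "'f set \<Rightarrow> ('f \<times> nat \<times> nat \<Rightarrow> 'f \<times> nat \<times> nat) \<Rightarrow> 'f \<Rightarrow> bool" where
  "bnd G g t \<longleftrightarrow> (\<exists>d\<in>darts G. fst d = t \<and> g d \<notin> darts G)"

definition RB :: "'f set \<Rightarrow> ('f \<times> nat \<times> nat \<Rightarrow> 'f \<times> nat \<times> nat) \<Rightarrow> bool" where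
  "RB G g \<longleftrightarrow> (\<forall>t\<in>G. \<exists>w. (t,w) \<in> (Restr (adjacent G g) G)\<^sup>* \<and> bnd G g w)"

lemma darts_Diff: "d \<in> darts (G - {u}) \<longleftrightarrow> d \<in> darts G \<and> fst d \<noteq> u"
  by (cases d) (auto simp: darts_def)

lemma path_remove:
  assumes "(t,w) \<in> (Restr (adjacent G g) G)\<^sup>*"
  shows "t \<in> G \<Longrightarrow> t \<noteq> u \<Longrightarrow> w = u \<or> bnd G g w \<Longrightarrow>
    \<exists>w'. (t,w') \<in> (Restr (adjacent (G-{u}) g) (G-{u}))\<^sup>* \<and> bnd (G-{u}) g w'"
  using assms
proof (induction rule: converse_rtrancl_induct)
  case base
  then have "bnd G g w" by simp
  then obtain d where d: "d \<in> darts G" "fst d = w" "g d \<notin> darts G" unfolding bnd_def by blast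
  have "bnd (G-{u}) g w" unfolding bnd_def
    using d base.prems(2) by (intro bexI[of _ d]) (auto simp: darts_Diff)
  thus ?case by blast
next
  case (step y z)
  from step.hyps(1) obtain d where d: "d \<in> darts G" "fst d = y" "fst (g d) = z" "y \<in> G" "z \<in> G"
    unfolding adjacent_def by auto
  show ?case
  proof (cases "z = u")
    case True
    have "bnd (G-{u}) g y" unfolding bnd_def
      using d True step.prems(2) by (intro bexI[of _ d]) (auto simp: darts_Diff)
    thus ?thesis by blast
  next
    case False
    obtain w' where w': "(z,w') \<in> (Restr (adjacent (G-{u}) g) (G-{u}))\<^sup>*" "bnd (G-{u}) g w'"
      using step.IH[OF d(5) False step.prems(3)] by blast
    have "(y,z) \<in> Restr (adjacent (G-{u}) g) (G-{u})"
      using d False step.prems(2) unfolding adjacent_def by (auto simp: darts_Diff)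
    then have "(y,w') \<in> (Restr (adjacent (G-{u}) g) (G-{u}))\<^sup>*" using w'(1) by (rule converse_rtrancl_into_rtrancl)
    thus ?thesis using w'(2) by blast
  qed
qed

lemma RB_remove: "RB G g \<Longrightarrow> RB (G-{u}) g"
proof -
  assume R: "RB G g"
  show "RB (G-{u}) g" unfolding RB_def
  proof
    fix t assume t: "t \<in> G - {u}"
    then obtain w where w: "(t,w) \<in> (Restr (adjacent G g) G)\<^sup>*" "bnd G g w" using R unfolding RB_def by blast
    show "\<exists>w. (t,w) \<in> (Restr (adjacent (G-{u}) g) (G-{u}))\<^sup>* \<and> bnd (G-{u}) g w"
      by (rule path_remove[OF w(1)]) (use t w(2) in auto)
  qed
qed

lemma RB_closed:
  assumes IT: "ideal_triangulation F g" and u: "u \<in> F"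
  shows "RB (F-{u}) g"
  unfolding RB_def
proof
  note F = IT_facts[OF IT]
  fix t assume t: "t \<in> F - {u}"
  have "adjacent F g \<subseteq> F \<times> F"
  proof
    fix x assume "x \<in> adjacent F g"
    then obtain d where d: "d \<in> darts F" "x = (fst d, fst (g d))" unfolding adjacent_def by auto
    have "g d \<in> darts F" using F(2) d(1) by blast
    then show "x \<in> F \<times> F" using d by (cases d; cases "g d") (auto simp: darts_def)
  qed
  then have "Restr (adjacent F g) F = adjacent F g" by blast
  then have tu: "(t,u) \<in> (Restr (adjacent F g) F)\<^sup>*" using F(6) t u by simp
  show "\<exists>w. (t,w) \<in> (Restr (adjacent (F-{u}) g) (F-{u}))\<^sup>* \<and> bnd (F-{u}) g w"
    by (rule path_remove[OF tu]) (use t in auto)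
qed

lemma ex_sol_aux:
  assumes "RB G g" and "\<And>d0. d0 \<in> darts G \<Longrightarrow> g d0 \<notin> darts G \<Longrightarrow> \<exists>ori. sol G g ori"
  shows "\<exists>ori. sol G g ori"
proof (cases "G = {}")
  case True
  then have "sol G g (\<lambda>_. True)" unfolding sol_def darts_def by simp
  thus ?thesis by blast
next
  case False
  then obtain t where "t \<in> G" by blast
  then obtain w where "bnd G g w" using assms(1) unfolding RB_def by blast
  then obtain d where "d \<in> darts G" "g d \<notin> darts G" unfolding bnd_def by blast
  thus ?thesis using assms(2) by blast
qed

lemma third:
  assumes "a<3" "b<3" "a\<noteq>(b::nat)"
  shows "3-a-b < 3" "a \<noteq> 3-a-b" "b \<noteq> 3-a-b"
  using assms by arith+

lemma claimC_aux:
  assumes IT: "ideal_triangulation F g"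
  shows "\<forall>G. card G = n \<longrightarrow> G \<subseteq> F \<longrightarrow> RB G g \<longrightarrow>
     (\<forall>d0 v. d0 \<in> darts G \<longrightarrow> g d0 \<notin> darts G \<longrightarrow> (\<exists>ori. sol G g ori \<and> ori d0 = v))"
proof (induction n rule: less_induct)
  case (less n)
  note F = IT_facts[OF IT]
  show ?case
  proof (intro allI impI)
    fix G d0 and v :: bool assume cG: "card G = n" and GF: "G \<subseteq> F" and R: "RB G g"
      and d0: "d0 \<in> darts G" and bd: "g d0 \<notin> darts G"
    obtain u a b where ud: "d0 = (u,a,b)" "u \<in> G" "a<3" "b<3" "a\<noteq>b"
      using d0 by (cases d0) (auto simp: darts_def)
    define cc where "cc = 3 - a - b"
    have abc: "a<3" "b<3" "cc<3" "a\<noteq>b" "b\<noteq>cc" "a\<noteq>cc"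
      using third[OF ud(3,4,5)] ud unfolding cc_def by auto
    define G' where "G' = G - {u}"
    have fin: "finite G" using F(1) GF finite_subset by blast
    have cpos: "card G > 0" using fin ud(2) card_gt_0_iff by blast
    have "card G' = card G - 1" unfolding G'_def using card_Diff_singleton[OF ud(2)] .
    then have cG': "card G' < n" using cG cpos by linarith
    have G'F: "G' \<subseteq> F" using GF unfolding G'_def by blast
    have R': "RB G' g" using RB_remove[OF R] unfolding G'_def .
    have IH: "\<And>d0 v. d0 \<in> darts G' \<Longrightarrow> g d0 \<notin> darts G' \<Longrightarrow> \<exists>ori. sol G' g ori \<and> ori d0 = v"
      by (rule less.IH[OF cG', rule_format, OF refl G'F R'])
    have Ex: "\<exists>ori. sol G' g ori"
    proof (rule ex_sol_aux[OF R'])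
      fix e assume "e \<in> darts G'" "g e \<notin> darts G'"
      from IH[OF this, of True] show "\<exists>ori. sol G' g ori" by blast
    qed
    have uF: "u \<in> F" using GF ud by blast
    have dF: "(u,b,cc) \<in> darts F" using abc uF by (auto simp: darts_def)
    have HAB: "g (u,a,b) \<notin> darts G \<or> (g (u,a,b) \<in> darts (G-{u}) \<and> ori' (g (u,a,b)) = v)" for ori'
      using bd ud by simp
    show "\<exists>ori. sol G g ori \<and> ori d0 = v"
    proof (cases "g (u,b,cc) \<in> darts G' \<and> g (u,cc,a) \<in> darts G'")
      case True
      have nb: "g (g (u,b,cc)) \<notin> darts G'" using F(3)[OF dF] unfolding G'_def by (simp add: darts_Diff)
      obtain ori' where o': "sol G' g ori'" "ori' (g (u,b,cc)) = (\<not> v)"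
        using IH[OF conjunct1[OF True] nb] by blast
      have "\<exists>ori. sol G g ori \<and> ori (u,a,b) = v \<and> (g (u,b,cc) \<notin> darts G \<longrightarrow> ori (u,b,cc) = (\<not>v))
           \<and> (\<forall>d. fst d \<noteq> u \<longrightarrow> ori d = ori' d)"
        by (rule fill[OF IT GF ud(2) o'(1)[unfolded G'_def] abc HAB[of ori']])
           (use o'(2) in simp, simp)
      then show ?thesis unfolding ud(1) by blast
    next
      case False
      obtain ori' where o': "sol G' g ori'" using Ex by blast
      have "\<exists>ori. sol G g ori \<and> ori (u,a,b) = v \<and> (g (u,b,cc) \<notin> darts G \<longrightarrow> ori (u,b,cc) = (\<not>v))
           \<and> (\<forall>d. fst d \<noteq> u \<longrightarrow> ori d = ori' d)"
        by (rule fill[OF IT GF ud(2) o'(1)[unfolded G'_def] abc HAB[of ori']])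
           (use False in \<open>unfold G'_def, blast\<close>, simp)
      then show ?thesis unfolding ud(1) by blast
    qed
  qed
qed

lemma claimC:
  assumes "ideal_triangulation F g" "G \<subseteq> F" "RB G g" "d0 \<in> darts G" "g d0 \<notin> darts G"
  shows "\<exists>ori. sol G g ori \<and> ori d0 = v"
  by (rule claimC_aux[OF assms(1), rule_format, OF refl assms(2-5)])

lemma exsol:
  assumes "ideal_triangulation F g" "G \<subseteq> F" "RB G g"
  shows "\<exists>ori. sol G g ori"
  using ex_sol_aux[OF assms(3)] claimC[OF assms] by blast

lemma side_eq:
  assumes "side_of e = side_of e'" "e \<in> darts F" "e' \<in> darts F"
  shows "e' = e \<or> e' = rev_dart e"
  using assms by (cases e; cases e') (auto simp: darts_def doubleton_eq_iff)

lemma side_ne: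
  assumes IT: "ideal_triangulation F g" and uF: "u \<in> F"
  and abc: "a<3" "b<3" "cc<3" "a\<noteq>b" "b\<noteq>cc" "a\<noteq>cc"
  shows "side_of (g (u,b,cc)) \<noteq> side_of (g (u,cc,a))"
proof
  note F = IT_facts[OF IT]
  assume h: "side_of (g (u,b,cc)) = side_of (g (u,cc,a))"
  have dF: "(u,b,cc) \<in> darts F" "(u,cc,a) \<in> darts F" "(u,cc,b) \<in> darts F" using abc uF by (auto simp: darts_def)
  have "g (u,cc,a) = g (u,b,cc) \<or> g (u,cc,a) = rev_dart (g (u,b,cc))"
    using side_eq[OF h F(2)[OF dF(1)] F(2)[OF dF(2)]] .
  then show False
  proof
    assume "g (u,cc,a) = g (u,b,cc)"
    then have "g (g (u,cc,a)) = g (g (u,b,cc))" by simp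
    then show False using F(3)[OF dF(1)] F(3)[OF dF(2)] abc by simp
  next
    assume "g (u,cc,a) = rev_dart (g (u,b,cc))"
    then have "g (u,cc,a) = g (u,cc,b)" using F(4)[OF dF(1)] by simp
    then have "g (g (u,cc,a)) = g (g (u,cc,b))" by simp
    then show False using F(3)[OF dF(2)] F(3)[OF dF(3)] abc by simp
  qed
qed

lemma bnd_dart_G':
  assumes IT: "ideal_triangulation F g" and "(u,p,q) \<in> darts F"
  shows "g (g (u,p,q)) \<notin> darts (G - {u})"
  using IT_facts(3)[OF IT assms(2)] by (simp add: darts_Diff)

lemma D_same:
  assumes IT: "ideal_triangulation F g" and GF: "G \<subseteq> F" and R: "RB G g" and uG: "u \<in> G"
  and abc: "a<3" "b<3" "cc<3" "a\<noteq>b" "b\<noteq>cc" "a\<noteq>cc"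
  and b1: "g (u,a,b) \<notin> darts G" and b2: "g (u,b,cc) \<notin> darts G"
  shows "\<exists>ori. sol G g ori \<and> ori (u,a,b) = True \<and> ori (u,b,cc) = c"
proof -
  have R': "RB (G-{u}) g" using RB_remove[OF R] .
  have G'F: "G - {u} \<subseteq> F" using GF by blast
  have uF: "u \<in> F" using uG GF by blast
  have dF: "(u,cc,a) \<in> darts F" using abc uF by (auto simp: darts_def)
  obtain ori' where o': "sol (G-{u}) g ori'" "g (u,cc,a) \<in> darts (G-{u}) \<Longrightarrow> ori' (g (u,cc,a)) = False"
  proof (cases "g (u,cc,a) \<in> darts (G-{u})")
    case True
    obtain ori' where "sol (G-{u}) g ori'" "ori' (g (u,cc,a)) = False"
      using claimC[OF IT G'F R' True bnd_dart_G'[OF IT dF]] by blast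
    then show ?thesis using that by blast
  next
    case False
    obtain ori' where "sol (G-{u}) g ori'" using exsol[OF IT G'F R'] by blast
    then show ?thesis using that False by blast
  qed
  have "\<exists>ori. sol G g ori \<and> ori (u,a,b) = True \<and> (g (u,b,cc) \<notin> darts G \<longrightarrow> ori (u,b,cc) = c)
           \<and> (\<forall>d. fst d \<noteq> u \<longrightarrow> ori d = ori' d)"
    by (rule fill[OF IT GF uG o'(1) abc]) (use b1 b2 o'(2) in \<open>auto simp: darts_Diff\<close>)
  then show ?thesis using b2 by blast
qed

lemma sol_rev: "sol G g ori \<Longrightarrow> d \<in> darts G \<Longrightarrow> ori (rev_dart d) = (\<not> ori d)"
  unfolding sol_def by blast

lemma D_same2:
  assumes IT: "ideal_triangulation F g" and GF: "G \<subseteq> F" and R: "RB G g"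
  and d1: "(u,p,q) \<in> darts G" and d2: "(u,p',q') \<in> darts G"
  and b1: "g (u,p,q) \<notin> darts G" and b2: "g (u,p',q') \<notin> darts G"
  and sd: "side_of (u,p,q) \<noteq> side_of (u,p',q')"
  shows "\<exists>ori. sol G g ori \<and> (ori (u,p,q) = ori (u,p',q')) = c"
proof -
  note F = IT_facts[OF IT]
  have dF: "(u,p,q) \<in> darts F" "(u,p',q') \<in> darts F" using d1 d2 darts_mono[OF GF] by blast+
  have pq: "p<3" "q<3" "p\<noteq>q" "p'<3" "q'<3" "p'\<noteq>q'" "u \<in> G" using d1 d2 by (auto simp: darts_def)
  have sd': "{p,q} \<noteq> {p',q'}" using sd by simp
  have rb1: "g (u,q,p) \<notin> darts G" using b1 F(4)[OF dF(1)] by (metis rev_dart.simps rev_darts_iff)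
  have rb2: "g (u,q',p') \<notin> darts G" using b2 F(4)[OF dF(2)] by (metis rev_dart.simps rev_darts_iff)
  have cases: "(p' = q \<and> q' \<noteq> p) \<or> (q' = q \<and> p' \<noteq> p) \<or> (p' = p \<and> q' \<noteq> q) \<or> (q' = p \<and> p' \<noteq> q)"
    using pq sd' by (auto simp: doubleton_eq_iff)
  have ar: "\<And>ori x y. sol G g ori \<Longrightarrow> (u,x,y) \<in> darts G \<Longrightarrow> ori (u,y,x) = (\<not> ori (u,x,y))"
    using sol_rev by (metis rev_dart.simps)
  from cases show ?thesis
  proof (elim disjE conjE)
    assume h: "p' = q" "q' \<noteq> p"
    obtain ori where "sol G g ori" "ori (u,p,q) = True" "ori (u,q,q') = c"
      using D_same[OF IT GF R pq(7), of p q q' c] pq h b1 b2 by auto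
    then show ?thesis using h by auto
  next
    assume h: "q' = q" "p' \<noteq> p"
    obtain ori where o: "sol G g ori" "ori (u,p,q) = True" "ori (u,q,p') = (\<not>c)"
      using D_same[OF IT GF R pq(7), of p q p' "\<not>c"] pq h b1 rb2 by auto
    have "ori (u,p',q) = c" using ar[OF o(1), of q p'] o(3) pq h by (auto simp: darts_def)
    then show ?thesis using h o by auto
  next
    assume h: "p' = p" "q' \<noteq> q"
    obtain ori where o: "sol G g ori" "ori (u,q,p) = True" "ori (u,p,q') = (\<not>c)"
      using D_same[OF IT GF R pq(7), of q p q' "\<not>c"] pq h rb1 b2 by auto
    have "ori (u,p,q) = False" using ar[OF o(1), of q p] o(2) pq by (auto simp: darts_def)
    then show ?thesis using h o by auto
  next
    assume h: "q' = p" "p' \<noteq> q"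
    obtain ori where o: "sol G g ori" "ori (u,q,p) = True" "ori (u,p,p') = c"
      using D_same[OF IT GF R pq(7), of q p p' c] pq h rb1 rb2 by auto
    have "ori (u,p,q) = False" using ar[OF o(1), of q p] o(2) pq by (auto simp: darts_def)
    moreover have "ori (u,p',p) = (\<not>c)" using ar[OF o(1), of p p'] o(3) pq h by (auto simp: darts_def)
    ultimately show ?thesis using h o by auto
  qed
qed

lemma lt3: "(x::nat) < 3 \<Longrightarrow> x = 0 \<or> x = 1 \<or> x = 2" by arith

lemma exists_ext:
  assumes IT: "ideal_triangulation F g" and uF: "u \<in> F"
  shows "\<exists>a b. a<3 \<and> b<3 \<and> a\<noteq>b \<and> fst (g (u,a,b)) \<noteq> u"
proof (rule ccontr)
  note F = IT_facts[OF IT]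
  assume "\<not> ?thesis"
  then have A: "\<And>a b. a<3 \<Longrightarrow> b<3 \<Longrightarrow> a\<noteq>b \<Longrightarrow> fst (g (u,a,b)) = u" by blast
  have info: "\<exists>p q. g (u,a,b) = (u,p,q) \<and> g (u,p,q) = (u,a,b) \<and> g (u,b,a) = (u,q,p) \<and> g (u,q,p) = (u,b,a)
        \<and> p<3 \<and> q<3 \<and> p\<noteq>q \<and> \<not>((p=a \<and> q=b) \<or> (p=b \<and> q=a))" if ab: "a<3" "b<3" "a\<noteq>b" for a b
  proof -
    have d: "(u,a,b) \<in> darts F" using ab uF by (auto simp: darts_def)
    obtain t p q where e: "g (u,a,b) = (t,p,q)" by (cases "g (u,a,b)") auto
    have "(t,p,q) \<in> darts F" using F(2)[OF d] e by simp
    moreover have "t = u" using A[OF ab] e by simp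
    moreover have "g (u,b,a) = (u,q,p)" using F(4)[OF d] e \<open>t = u\<close> by simp
    moreover have "g (u,p,q) = (u,a,b)" using F(3)[OF d] e \<open>t = u\<close> by simp
    moreover have "(u,b,a) \<in> darts F" using ab uF by (auto simp: darts_def)
    moreover have "{p,q} \<noteq> {a,b}" using F(5)[OF d] e \<open>t = u\<close> by simp
    then have "\<not>((p=a \<and> q=b) \<or> (p=b \<and> q=a))" by auto
    moreover have "g (u,q,p) = (u,b,a)" using F(3)[OF \<open>(u,b,a) \<in> darts F\<close>] \<open>g (u,b,a) = (u,q,p)\<close> by simp
    ultimately show ?thesis using e by (intro exI[of _ p] exI[of _ q]) (auto simp: darts_def)
  qed
  have n0: "(0::nat)<3" and n1: "(1::nat)<3" and n2: "(2::nat)<3" and n01: "(0::nat)\<noteq>1" and n12: "(1::nat)\<noteq>2" and n20: "(2::nat)\<noteq>0" by simp_all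
  obtain p1 q1 where 1: "g (u,0,1) = (u,p1,q1)" "g (u,p1,q1) = (u,0,1)" "g (u,1,0) = (u,q1,p1)" "g (u,q1,p1) = (u,1,0)"
    "p1<3" "q1<3" "p1\<noteq>q1" "\<not>((p1=0 \<and> q1=1) \<or> (p1=1 \<and> q1=0))" using info[OF n0 n1 n01] by blast
  obtain p2 q2 where 2: "g (u,1,2) = (u,p2,q2)" "g (u,p2,q2) = (u,1,2)" "g (u,2,1) = (u,q2,p2)" "g (u,q2,p2) = (u,2,1)"
    "p2<3" "q2<3" "p2\<noteq>q2" "\<not>((p2=1 \<and> q2=2) \<or> (p2=2 \<and> q2=1))" using info[OF n1 n2 n12] by blast
  obtain p3 q3 where 3: "g (u,2,0) = (u,p3,q3)" "g (u,p3,q3) = (u,2,0)" "g (u,0,2) = (u,q3,p3)" "g (u,q3,p3) = (u,0,2)"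
    "p3<3" "q3<3" "p3\<noteq>q3" "\<not>((p3=2 \<and> q3=0) \<or> (p3=0 \<and> q3=2))" using info[OF n2 n0 n20] by blast
  have r1: "(p1,q1) \<in> {(1,2),(2,1),(2,0),(0,2)}" using 1(5-8) lt3[of p1] lt3[of q1] by auto
  have r2: "(p2,q2) \<in> {(0,1),(1,0),(2,0),(0,2)}" using 2(5-8) lt3[of p2] lt3[of q2] by auto
  have r3: "(p3,q3) \<in> {(1,2),(2,1),(0,1),(1,0)}" using 3(5-8) lt3[of p3] lt3[of q3] by auto
  show False using r1 r2 r3 1(1-4) 2(1-4) 3(1-4) by auto
qed

lemma claimD_aux:
  assumes IT: "ideal_triangulation F g"
  shows "\<forall>G. card G = n \<longrightarrow> G \<subseteq> F \<longrightarrow> RB G g \<longrightarrow>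
     (\<forall>d1 d2 c. d1 \<in> darts G \<longrightarrow> d2 \<in> darts G \<longrightarrow> g d1 \<notin> darts G \<longrightarrow> g d2 \<notin> darts G \<longrightarrow>
        side_of d1 \<noteq> side_of d2 \<longrightarrow> (\<exists>ori. sol G g ori \<and> (ori d1 = ori d2) = c))"
proof (induction n rule: less_induct)
  case (less n)
  note F = IT_facts[OF IT]
  show ?case
  proof (intro allI impI)
    fix G d1 d2 and c :: bool
    assume cG: "card G = n" and GF: "G \<subseteq> F" and R: "RB G g"
      and d1: "d1 \<in> darts G" and d2: "d2 \<in> darts G" and b1: "g d1 \<notin> darts G" and b2: "g d2 \<notin> darts G"
      and sd: "side_of d1 \<noteq> side_of d2"
    obtain u a b where ud: "d1 = (u,a,b)" "u \<in> G" "a<3" "b<3" "a\<noteq>b"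
      using d1 by (cases d1) (auto simp: darts_def)
    obtain t2 p' q' where d2e: "d2 = (t2,p',q')" by (cases d2) auto
    show "\<exists>ori. sol G g ori \<and> (ori d1 = ori d2) = c"
    proof (cases "t2 = u")
      case True
      show ?thesis using D_same2[OF IT GF R, of u a b p' q' c] d1 d2 b1 b2 sd ud(1) d2e True by simp
    next
      case False
      define cc where "cc = 3 - a - b"
      have abc: "a<3" "b<3" "cc<3" "a\<noteq>b" "b\<noteq>cc" "a\<noteq>cc"
        using third[OF ud(3,4,5)] ud unfolding cc_def by auto
      define G' where "G' = G - {u}"
      have fin: "finite G" using F(1) GF finite_subset by blast
      have cpos: "card G > 0" using fin ud(2) card_gt_0_iff by blast
      have "card G' = card G - 1" unfolding G'_def using card_Diff_singleton[OF ud(2)] .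
      then have cG': "card G' < n" using cG cpos by linarith
      have G'F: "G' \<subseteq> F" using GF unfolding G'_def by blast
      have R': "RB G' g" using RB_remove[OF R] unfolding G'_def .
      have IH: "\<And>e1 e2 c. e1 \<in> darts G' \<Longrightarrow> e2 \<in> darts G' \<Longrightarrow> g e1 \<notin> darts G' \<Longrightarrow> g e2 \<notin> darts G' \<Longrightarrow>
          side_of e1 \<noteq> side_of e2 \<Longrightarrow> \<exists>ori. sol G' g ori \<and> (ori e1 = ori e2) = c"
        by (rule less.IH[OF cG', rule_format, OF refl G'F R'])
      have uF: "u \<in> F" using GF ud by blast
      have dF: "(u,b,cc) \<in> darts F" "(u,cc,a) \<in> darts F" using abc uF by (auto simp: darts_def)
      have HAB: "g (u,a,b) \<notin> darts G \<or> (g (u,a,b) \<in> darts (G-{u}) \<and> ori' (g (u,a,b)) = v)" for ori' v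
        using b1 ud by simp
      have fin_eq: "\<And>ori ori'. ori (u,a,b) = (ori' d2 = c) \<Longrightarrow> (\<forall>d. fst d \<noteq> u \<longrightarrow> ori d = ori' d) \<Longrightarrow>
           (ori d1 = ori d2) = c"
      proof -
        fix ori ori' :: "'a \<times> nat \<times> nat \<Rightarrow> bool"
        assume h: "ori (u,a,b) = (ori' d2 = c)" "\<forall>d. fst d \<noteq> u \<longrightarrow> ori d = ori' d"
        have "ori d2 = ori' d2" using h(2) d2e False by simp
        then show "(ori d1 = ori d2) = c" using h(1) ud(1) by auto
      qed
      show ?thesis
      proof (cases "g (u,b,cc) \<in> darts G' \<and> g (u,cc,a) \<in> darts G'")
        case True
        have nb1: "g (g (u,b,cc)) \<notin> darts G'" using bnd_dart_G'[OF IT dF(1)] unfolding G'_def .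
        have nb2: "g (g (u,cc,a)) \<notin> darts G'" using bnd_dart_G'[OF IT dF(2)] unfolding G'_def .
        obtain ori' where o': "sol G' g ori'" "(ori' (g (u,b,cc)) = ori' (g (u,cc,a))) = False"
          using IH[OF conjunct1[OF True] conjunct2[OF True] nb1 nb2 side_ne[OF IT uF abc]] by blast
        have "\<exists>ori. sol G g ori \<and> ori (u,a,b) = (ori' d2 = c) \<and>
             (g (u,b,cc) \<notin> darts G \<longrightarrow> ori (u,b,cc) = (\<not>(ori' d2 = c)))
           \<and> (\<forall>d. fst d \<noteq> u \<longrightarrow> ori d = ori' d)"
        proof (rule fill[OF IT GF ud(2) o'(1)[unfolded G'_def] abc HAB[of ori']])
          show "\<not> ((ori' d2 = c) = ori' (g (u,b,cc)) \<and> (ori' d2 = c) = ori' (g (u,cc,a)))"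
            using o'(2) by (cases "ori' (g (u,b,cc))"; cases "ori' d2 = c"; simp)
        qed blast
        then obtain ori where o: "sol G g ori" "ori (u,a,b) = (ori' d2 = c)" "\<forall>d. fst d \<noteq> u \<longrightarrow> ori d = ori' d"
          by blast
        show ?thesis using o(1) fin_eq[OF o(2,3)] by blast
      next
        case False
        obtain ori' where o': "sol G' g ori'" using exsol[OF IT G'F R'] by blast
        have "\<exists>ori. sol G g ori \<and> ori (u,a,b) = (ori' d2 = c) \<and>
             (g (u,b,cc) \<notin> darts G \<longrightarrow> ori (u,b,cc) = (\<not>(ori' d2 = c)))
           \<and> (\<forall>d. fst d \<noteq> u \<longrightarrow> ori d = ori' d)"
          by (rule fill[OF IT GF ud(2) o'(1)[unfolded G'_def] abc HAB[of ori']])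
             (use False in \<open>unfold G'_def, blast\<close>, simp)
        then obtain ori where o: "sol G g ori" "ori (u,a,b) = (ori' d2 = c)" "\<forall>d. fst d \<noteq> u \<longrightarrow> ori d = ori' d"
          by blast
        show ?thesis using o(1) fin_eq[OF o(2,3)] by blast
      qed
    qed
  qed
qed

lemma claimD:
  assumes "ideal_triangulation F g" "G \<subseteq> F" "RB G g" "d1 \<in> darts G" "d2 \<in> darts G"
    "g d1 \<notin> darts G" "g d2 \<notin> darts G" "side_of d1 \<noteq> side_of d2"
  shows "\<exists>ori. sol G g ori \<and> (ori d1 = ori d2) = c"
  by (rule claimD_aux[OF assms(1), rule_format, OF refl assms(2-8)])

theorem lemma2p9:
  fixes F :: "'f set" and g :: "'f \<times> nat \<times> nat \<Rightarrow> 'f \<times> nat \<times> nat"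
  assumes "ideal_triangulation F g"
  shows "\<exists>ori. is_branching F g ori"
proof -
  note IT = assms
  note F = IT_facts[OF IT]
  obtain u where uF: "u \<in> F" using IT unfolding ideal_triangulation_def by blast
  obtain a b where ab: "a<3" "b<3" "a\<noteq>b" "fst (g (u,a,b)) \<noteq> u" using exists_ext[OF IT uF] by blast
  define cc where "cc = 3 - a - b"
  have abc: "a<3" "b<3" "cc<3" "a\<noteq>b" "b\<noteq>cc" "a\<noteq>cc"
    using third[OF ab(1,2,3)] ab unfolding cc_def by auto
  define G' where "G' = F - {u}"
  have G'F: "G' \<subseteq> F" unfolding G'_def by blast
  have R': "RB G' g" unfolding G'_def by (rule RB_closed[OF IT uF])
  have dF: "(u,a,b) \<in> darts F" "(u,b,cc) \<in> darts F" "(u,cc,a) \<in> darts F" using abc uF by (auto simp: darts_def)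
  have gab: "g (u,a,b) \<in> darts (F-{u})" using F(2)[OF dF(1)] ab(4) by (simp add: darts_Diff)
  have HAB: "g (u,a,b) \<notin> darts F \<or> (g (u,a,b) \<in> darts (F-{u}) \<and> ori' (g (u,a,b)) = ori' (g (u,a,b)))" for ori'
    using gab by simp
  have FF: "F \<subseteq> F" by simp
  obtain ori where so: "sol F g ori"
  proof (cases "g (u,b,cc) \<in> darts G' \<and> g (u,cc,a) \<in> darts G'")
    case True
    have nb1: "g (g (u,b,cc)) \<notin> darts G'" using bnd_dart_G'[OF IT dF(2)] unfolding G'_def .
    have nb2: "g (g (u,cc,a)) \<notin> darts G'" using bnd_dart_G'[OF IT dF(3)] unfolding G'_def .
    obtain ori' where o': "sol G' g ori'" "(ori' (g (u,b,cc)) = ori' (g (u,cc,a))) = False"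
      using claimD[OF IT G'F R' conjunct1[OF True] conjunct2[OF True] nb1 nb2 side_ne[OF IT uF abc]] by blast
    have "\<exists>ori. sol F g ori \<and> ori (u,a,b) = ori' (g (u,a,b)) \<and>
         (g (u,b,cc) \<notin> darts F \<longrightarrow> ori (u,b,cc) = (\<not> ori' (g (u,a,b))))
       \<and> (\<forall>d. fst d \<noteq> u \<longrightarrow> ori d = ori' d)"
    proof (rule fill[OF IT FF uF o'(1)[unfolded G'_def] abc HAB[of ori']])
      show "\<not> (ori' (g (u,a,b)) = ori' (g (u,b,cc)) \<and> ori' (g (u,a,b)) = ori' (g (u,cc,a)))"
        using o'(2) by (cases "ori' (g (u,b,cc))"; cases "ori' (g (u,a,b))"; simp)
    qed blast
    then show ?thesis using that by blast
  next
    case False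
    obtain ori' where o': "sol G' g ori'" using exsol[OF IT G'F R'] by blast
    have "\<exists>ori. sol F g ori \<and> ori (u,a,b) = ori' (g (u,a,b)) \<and>
         (g (u,b,cc) \<notin> darts F \<longrightarrow> ori (u,b,cc) = (\<not> ori' (g (u,a,b))))
       \<and> (\<forall>d. fst d \<noteq> u \<longrightarrow> ori d = ori' d)"
      by (rule fill[OF IT FF uF o'(1)[unfolded G'_def] abc HAB[of ori']])
         (use False in \<open>unfold G'_def, blast\<close>, simp)
    then show ?thesis using that by blast
  qed
  have "is_branching F g ori"
    unfolding is_branching_def
  proof (intro conjI)
    show "\<forall>d\<in>darts F. ori (rev_dart d) = (\<not> ori d)" using so unfolding sol_def by blast
    show "\<forall>d\<in>darts F. ori (g d) = ori d" using so F(2) unfolding sol_def by blast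
    show "\<forall>t\<in>F. \<exists>r::nat\<Rightarrow>nat. inj_on r {0, 1, 2} \<and> (\<forall>a<3. \<forall>b<3. a \<noteq> b \<longrightarrow> ori (t, a, b) = (r a < r b))"
      using conjunct2[OF conjunct2[OF so[unfolded sol_def]]] unfolding good_def by simp
  qed
  then show ?thesis by blast
qed


end
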